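(* Let $X^{2n}$ be a quasitoric manifold over a simple polytope $P^n$ with characteristic function $\lambda$, let $T^{n-1}\subset T^n$ be a subtorus, and let $x$ be a fixed point of the $T^n$-action. Then $x$ is not an isolated fixed point of the restricted $T^{n-1}$-action if and only if some $n-1$ of the characteristic values at $x$ lie in $\Pi$.
   Context: A quasitoric manifold $X^{2n}$ carries a locally standard $T^n$-action with orbit space a simple $n$-polytope $P^n$; for each facet $F$ of $P^n$, $\lambda(F)\in N=\mathrm{Hom}(T^1,T^n)\cong\mathbb{Z}^n$ is the primitive vector of the circle subgroup stabilizing points over the interior of $F$. The fixed points correspond to vertices of $P^n$; the characteristic values at a fixed point $x$ are the $n$ vectors $\lambda(F)$ for the $n$ facets $F$ containing the corresponding vertex. For a subtorus $T^{n-1}\subset T^n$ with quotient map $p\colon T^n\to T^n/T^{n-1}\cong T^1$, let $\Pi=\ker(p_*\colon N\to \mathrm{Hom}(T^1,T^n/T^{n-1})\cong\mathbb{Z})$, which equals the image of $\mathrm{Hom}(T^1,T^{n-1})$ in $N$. *)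

theory Defs
  imports "HOL-Analysis.Analysis"
begin

text \<open>N = Z^n is int^'n; the torus T^n = R^n / Z^n, with
 elements represented by vectors in real^'n.
 The quasitoric manifold is the canonical model X = (P x T^n)/~ of
 Davis-Januszkiewicz, realised as the set of equivalence classes of pairs
 (p,g) in P x R^n with the quotient topology.\<close>

definition lattice :: "(real^'n) set" where
  "lattice = {z. \<forall>i. z $ i \<in> \<int>}"

definition ivec :: "int^'n \<Rightarrow> real^'n" where
  "ivec k = (\<chi> i. of_int (k $ i))"

definition simple_polytope :: "(real^'n) set \<Rightarrow> bool" where
  "simple_polytope P \<longleftrightarrow> polytope P \<and> aff_dim P = int CARD('n) \<and>
     (\<forall>v. v extreme_point_of P \<longrightarrow> card {F. F facet_of P \<and> v \<in> F} = CARD('n))"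

definition char_function :: "(real^'n) set \<Rightarrow> ((real^'n) set \<Rightarrow> int^'n) \<Rightarrow> bool" where
  "char_function P lam \<longleftrightarrow>
     (\<forall>v. v extreme_point_of P \<longrightarrow>
        (\<exists>f :: 'n \<Rightarrow> (real^'n) set. bij_betw f UNIV {F. F facet_of P \<and> v \<in> F} \<and>
           det (\<chi> i j. lam (f j) $ i) \<in> {1, -1::int}))"

text \<open>Isotropy subgroup (lifted to R^n) at a point p of P: the subtorus generated
 by the circles lam(F) for the facets F containing p.\<close>
definition isotropy :: "(real^'n) set \<Rightarrow> ((real^'n) set \<Rightarrow> int^'n) \<Rightarrow> real^'n \<Rightarrow> (real^'n) set" where
  "isotropy P lam p =
     {t. \<exists>w \<in> span (ivec ` lam ` {F. F facet_of P \<and> p \<in> F}). t - w \<in> lattice}"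

definition qrel :: "(real^'n) set \<Rightarrow> ((real^'n) set \<Rightarrow> int^'n) \<Rightarrow> (((real^'n) \<times> (real^'n)) \<times> ((real^'n) \<times> (real^'n))) set" where
  "qrel P lam = {((p, g), (q, h)). p \<in> P \<and> q = p \<and> g - h \<in> isotropy P lam p}"

definition qspace :: "(real^'n) set \<Rightarrow> ((real^'n) set \<Rightarrow> int^'n) \<Rightarrow> ((real^'n) \<times> (real^'n)) set set" where
  "qspace P lam = (P \<times> UNIV) // qrel P lam"

definition qopen :: "(real^'n) set \<Rightarrow> ((real^'n) set \<Rightarrow> int^'n) \<Rightarrow> ((real^'n) \<times> (real^'n)) set set \<Rightarrow> bool" where
  "qopen P lam U \<longleftrightarrow> U \<subseteq> qspace P lam \<and> openin (top_of_set (P \<times> UNIV)) (\<Union>U)"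

definition tact :: "real^'n \<Rightarrow> ((real^'n) \<times> (real^'n)) set \<Rightarrow> ((real^'n) \<times> (real^'n)) set" where
  "tact t c = (\<lambda>(p, g). (p, g + t)) ` c"

text \<open>A codimension-one subtorus T^{n-1} of T^n is the image of a rational
 linear subspace V of R^n of dimension n-1.\<close>
definition subtorus_codim1 :: "(real^'n) set \<Rightarrow> bool" where
  "subtorus_codim1 V \<longleftrightarrow> subspace V \<and> dim V = CARD('n) - 1 \<and> V = span (V \<inter> lattice)"

text \<open>Pi = ker(p_* : N -> Hom(T^1, T^n/T^{n-1})).\<close>
definition Pi_lattice :: "(real^'n) set \<Rightarrow> (int^'n) set" where
  "Pi_lattice V = {k. ivec k \<in> V}"

definition fixed_by :: "(real^'n) set \<Rightarrow> ((real^'n) \<times> (real^'n)) set \<Rightarrow> bool" where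
  "fixed_by H y \<longleftrightarrow> (\<forall>t\<in>H. tact t y = y)"

definition isolated_fixed_point ::
  "(real^'n) set \<Rightarrow> ((real^'n) set \<Rightarrow> int^'n) \<Rightarrow> (real^'n) set \<Rightarrow> ((real^'n) \<times> (real^'n)) set \<Rightarrow> bool" where
  "isolated_fixed_point P lam H x \<longleftrightarrow> fixed_by H x \<and>
     (\<exists>U. qopen P lam U \<and> x \<in> U \<and> (\<forall>y\<in>U. fixed_by H y \<longrightarrow> y = x))"

end

theory Submission
  imports Defs
begin


lemma lattice_diff: "a \<in> lattice \<Longrightarrow> b \<in> lattice \<Longrightarrow> a - b \<in> lattice"
  by (auto simp: lattice_def)
lemma lattice_add: "a \<in> lattice \<Longrightarrow> b \<in> lattice \<Longrightarrow> a + b \<in> lattice"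
  by (auto simp: lattice_def)
lemma lattice_zero: "0 \<in> lattice"
  by (auto simp: lattice_def)

lemma countable_lattice: "countable (lattice :: (real^'n) set)"
  unfolding lattice_def by (rule countable_vector) (simp add: countable_int)

lemma kronecker:
  fixes V W :: "(real^'n) set"
  assumes V: "subspace V" and W: "subspace W"
    and sub: "\<And>t. t \<in> V \<Longrightarrow> \<exists>w\<in>W. t - w \<in> lattice"
  shows "V \<subseteq> W"
proof
  fix u assume uV: "u \<in> V"
  show "u \<in> W"
  proof (rule ccontr)
    assume uW: "u \<notin> W"
    have "span W \<subset> span (insert u W)"
      using uW W by (metis insertI1 psubsetI span_base span_eq_iff span_mono subset_insertI)
    then obtain a where a0: "a \<noteq> 0" and aspan: "a \<in> span (insert u W)"
        and aorth: "\<And>y. y \<in> span W \<Longrightarrow> orthogonal a y"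
      using orthogonal_to_subspace_exists_gen by blast
    obtain c w where aeq: "a = c *\<^sub>R u + w" and wW: "w \<in> span W"
      using aspan by (auto simp: span_insert) (metis add.commute diff_add_cancel)
    have "a \<bullet> a = c * (a \<bullet> u) + a \<bullet> w" by (simp add: aeq inner_add_right)
    moreover have "a \<bullet> w = 0" using aorth[OF wW] by (simp add: orthogonal_def)
    ultimately have au: "a \<bullet> u \<noteq> 0" using a0 by auto
    define C where "C = (\<lambda>l. a \<bullet> l) ` lattice"
    have "countable C" unfolding C_def using countable_lattice by blast
    then have "countable ((\<lambda>s. s / (a \<bullet> u)) ` C)" by blast
    then obtain s where s: "s \<notin> (\<lambda>s. s / (a \<bullet> u)) ` C"
      using uncountable_UNIV_real by (metis UNIV_eq_I)
    have "s *\<^sub>R u \<in> V" using V uV by (simp add: subspace_scale)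
    then obtain w' where w'W: "w' \<in> W" and l: "s *\<^sub>R u - w' \<in> lattice" using sub by blast
    have "a \<bullet> w' = 0" using aorth[of w'] w'W by (simp add: orthogonal_def span_base)
    then have "a \<bullet> (s *\<^sub>R u - w') = s * (a \<bullet> u)" by (simp add: inner_diff_right)
    then have "s * (a \<bullet> u) \<in> C" unfolding C_def using l by (metis image_eqI)
    then have "s \<in> (\<lambda>s. s / (a \<bullet> u)) ` C" using au by (metis image_eqI nonzero_mult_div_cancel_right)
    with s show False by blast
  qed
qed



lemma hyp_hull:
  fixes C :: "(real^'n) set"
  assumes a: "a \<noteq> 0" and sub: "C \<subseteq> {x. a \<bullet> x = b}" and dC: "aff_dim C = int CARD('n) - 1"
  shows "affine hull C = {x. a \<bullet> x = b}"
proof (rule affine_dim_equal)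
  show "affine (affine hull C)" by simp
  show "affine {x. a \<bullet> x = b}" by (simp add: affine_hyperplane)
  have "C \<noteq> {}"
  proof
    assume "C = {}"
    with dC have "int CARD('n) = 0" by simp
    then show False by simp
  qed
  then show "affine hull C \<noteq> {}" by simp
  show "affine hull C \<subseteq> {x. a \<bullet> x = b}" using sub by (simp add: affine_hyperplane hull_minimal)
  show "aff_dim (affine hull C) = aff_dim {x. a \<bullet> x = b}" using a dC by simp
qed



lemma edge:
  fixes P :: "(real^'n) set"
  assumes poly: "polytope P" and dimP: "aff_dim P = int CARD('n)" and vP: "v \<in> P"
   and Ssub: "S \<subseteq> {F. F facet_of P \<and> v \<in> F}" and cardS: "card S < CARD('n)"
   and F0: "{F. F facet_of P \<and> v \<in> F} \<subseteq> insert F0 S"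
   and r: "r > 0"
  shows "\<exists>q\<in>P. q \<noteq> v \<and> dist q v < r \<and> (\<forall>C\<in>S. q \<in> C)"
proof -
  have polyh: "polyhedron P" using poly by (simp add: polytope_imp_polyhedron)
  obtain Fh where "finite Fh" and seq: "P = affine hull P \<inter> \<Inter>Fh"
             and faces: "\<And>h. h \<in> Fh \<Longrightarrow> \<exists>a b. a \<noteq> 0 \<and> h = {x. a \<bullet> x \<le> b}"
             and min: "\<And>F'. F' \<subset> Fh \<Longrightarrow> P \<subset> (affine hull P) \<inter> \<Inter>F'"
    using polyh by (simp add: polyhedron_Int_affine_minimal) meson
  then obtain a b where ab: "\<And>h. h \<in> Fh \<Longrightarrow> a h \<noteq> 0 \<and> h = {x. a h \<bullet> x \<le> b h}"
    by metis
  have facet: "(c facet_of P) \<longleftrightarrow> (\<exists>h. h \<in> Fh \<and> c = P \<inter> {x. a h \<bullet> x = b h})" for c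
    by (rule facet_of_polyhedron_explicit [OF \<open>finite Fh\<close> seq ab min])
  have rel: "rel_interior P = {x \<in> P. \<forall>h\<in>Fh. a h \<bullet> x < b h}"
    by (rule rel_interior_polyhedron_explicit [OF \<open>finite Fh\<close> seq ab min])
  have ahP: "affine hull P = UNIV" using dimP aff_dim_eq_full[of P] by simp
  have Peq: "P = \<Inter>Fh" using seq ahP by simp
  have inP: "y \<in> P \<longleftrightarrow> (\<forall>h\<in>Fh. a h \<bullet> y \<le> b h)" for y
    using ab by (subst Peq) auto
  have hullfacet: "affine hull (P \<inter> {x. a h \<bullet> x = b h}) = {x. a h \<bullet> x = b h}"
    if "h \<in> Fh" for h
  proof (rule hyp_hull)
    show "a h \<noteq> 0" using ab that by blast
    show "P \<inter> {x. a h \<bullet> x = b h} \<subseteq> {x. a h \<bullet> x = b h}" by blast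
    have "(P \<inter> {x. a h \<bullet> x = b h}) facet_of P" using facet that by blast
    then show "aff_dim (P \<inter> {x. a h \<bullet> x = b h}) = int CARD('n) - 1"
      using dimP by (simp add: facet_of_def)
  qed
  have "\<forall>C\<in>S. \<exists>h. h \<in> Fh \<and> C = P \<inter> {x. a h \<bullet> x = b h}" using Ssub facet by blast
  then obtain hc where hc: "\<And>C. C \<in> S \<Longrightarrow> hc C \<in> Fh \<and> C = P \<inter> {x. a (hc C) \<bullet> x = b (hc C)}"
    by metis
  have finS: "finite S"
    using Ssub finite_polytope_facets[OF poly] by (metis (no_types, lifting) finite_subset mem_Collect_eq subsetI subset_iff)
  have "dim ((\<lambda>C. a (hc C)) ` S) \<le> card ((\<lambda>C. a (hc C)) ` S)"
    using finS by (simp add: dim_le_card')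
  also have "\<dots> \<le> card S" using finS card_image_le by blast
  finally have "dim ((\<lambda>C. a (hc C)) ` S) < DIM(real^'n)" using cardS by simp
  then obtain d where d0: "d \<noteq> 0" and dorth: "\<And>y. y \<in> span ((\<lambda>C. a (hc C)) ` S) \<Longrightarrow> orthogonal d y"
    using orthogonal_to_subspace_exists by blast
  have "rel_interior P \<noteq> {}"
    using vP polyhedron_imp_convex[OF polyh] rel_interior_eq_empty by blast
  then obtain z where zP: "z \<in> P" and zlt: "\<And>h. h \<in> Fh \<Longrightarrow> a h \<bullet> z < b h"
    using rel by blast
  define Q where "Q = (\<forall>t\<in>{0..1}. (1 - t) *\<^sub>R z + t *\<^sub>R (v + d) \<notin> affine hull F0)"
  define d' where "d' = (if Q then d else - d)"
  have d'0: "d' \<noteq> 0" using d0 by (simp add: d'_def)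
  have d'orth: "a (hc C) \<bullet> d' = 0" if "C \<in> S" for C
  proof -
    have "orthogonal d (a (hc C))" using dorth that by (simp add: span_base)
    then show ?thesis by (simp add: d'_def orthogonal_def inner_commute)
  qed
  have tight: "a h \<bullet> d' \<le> 0" if hF: "h \<in> Fh" and hv: "a h \<bullet> v = b h" for h
  proof -
    define C where "C = P \<inter> {x. a h \<bullet> x = b h}"
    have "C facet_of P" using facet hF C_def by blast
    moreover have "v \<in> C" using vP hv C_def by blast
    ultimately have "C \<in> insert F0 S" using F0 by blast
    moreover have hullC: "affine hull C = {x. a h \<bullet> x = b h}" using hullfacet hF C_def by blast
    ultimately consider "C \<in> S" | "C = F0" by blast
    then show ?thesis
    proof cases
      case 1
      have hc1: "hc C \<in> Fh" and hc2: "C = P \<inter> {x. a (hc C) \<bullet> x = b (hc C)}" using hc 1 by auto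
      have "affine hull C = {x. a (hc C) \<bullet> x = b (hc C)}" using hullfacet[OF hc1] hc2 by simp
      moreover have "a (hc C) \<bullet> v = b (hc C)" using \<open>v \<in> C\<close> hc2 by blast
      then have "a (hc C) \<bullet> (v + d') = b (hc C)"
        using d'orth[OF 1] by (simp add: inner_add_right)
      ultimately have "v + d' \<in> {x. a h \<bullet> x = b h}" using hullC by blast
      then show ?thesis using hv by (simp add: inner_add_right)
    next
      case 2
      have hull0: "affine hull F0 = {x. a h \<bullet> x = b h}" using hullC 2 by simp
      have zl: "a h \<bullet> z < b h" using zlt hF by blast
      show ?thesis
      proof (cases Q)
        case True
        show ?thesis
        proof (rule ccontr)
          assume "\<not> a h \<bullet> d' \<le> 0"
          then have pos: "a h \<bullet> d > 0" using True by (simp add: d'_def)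
          define t where "t = (b h - a h \<bullet> z) / (a h \<bullet> d + b h - a h \<bullet> z)"
          have den: "a h \<bullet> d + b h - a h \<bullet> z > 0" using pos zl by simp
          have t01: "t \<in> {0..1}" using den pos zl by (auto simp: t_def field_simps)
          have "a h \<bullet> ((1 - t) *\<^sub>R z + t *\<^sub>R (v + d)) = (1 - t) * (a h \<bullet> z) + t * (b h + a h \<bullet> d)"
            using hv by (simp add: inner_add_right algebra_simps)
          also have "\<dots> = b h"
          proof -
            have gen: "(1 - (B - A) / (D + B - A)) * A + (B - A) / (D + B - A) * (B + D) = B"
              if "D + B - A > 0" for A B D :: real
            proof -
              have "1 - (B - A) / (D + B - A) = D / (D + B - A)" using that by (simp add: diff_divide_distrib[symmetric] divide_simps)
              then have "(1 - (B - A) / (D + B - A)) * A + (B - A) / (D + B - A) * (B + D) = (D * A + (B - A) * (B + D)) / (D + B - A)"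
                by (simp add: add_divide_distrib)
              also have "D * A + (B - A) * (B + D) = B * (D + B - A)" by (simp add: algebra_simps)
              finally show ?thesis using that by simp
            qed
            show ?thesis using gen[OF den] unfolding t_def by simp
          qed
          finally have "(1 - t) *\<^sub>R z + t *\<^sub>R (v + d) \<in> affine hull F0" using hull0 by simp
          with True t01 show False unfolding Q_def by blast
        qed
      next
        case False
        then obtain t where t01: "t \<in> {0..1}" and tin: "(1 - t) *\<^sub>R z + t *\<^sub>R (v + d) \<in> affine hull F0"
          unfolding Q_def by blast
        have eq: "(1 - t) * (a h \<bullet> z) + t * (b h + a h \<bullet> d) = b h"
          using tin hull0 hv by (simp add: inner_add_right algebra_simps)
        have "t \<noteq> 0" using eq zl by auto
        then have tp: "t > 0" using t01 by auto
        have "t * (a h \<bullet> d) = (1 - t) * (b h - a h \<bullet> z)" using eq by (simp add: algebra_simps)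
        moreover have "(1 - t) * (b h - a h \<bullet> z) \<ge> 0" using t01 zl by simp
        ultimately have "t * (a h \<bullet> d) \<ge> 0" by simp
        then have "a h \<bullet> d \<ge> 0" using tp by (simp add: zero_le_mult_iff)
        then show ?thesis using False by (simp add: d'_def)
      qed
    qed
  qed
  define Ov where "Ov = (\<Inter>h\<in>{h\<in>Fh. a h \<bullet> v < b h}. {y. a h \<bullet> y < b h})"
  have "open Ov" unfolding Ov_def using \<open>finite Fh\<close> by (intro open_INT) (auto simp: open_halfspace_lt)
  moreover have "v \<in> Ov" unfolding Ov_def by blast
  ultimately obtain e where e: "e > 0" "ball v e \<subseteq> Ov" by (meson open_contains_ball)
  define \<epsilon> where "\<epsilon> = min e r / (2 * norm d')"
  have nd: "norm d' > 0" using d'0 by simp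
  have \<epsilon>0: "\<epsilon> > 0" using e r nd by (simp add: \<epsilon>_def)
  define q where "q = v + \<epsilon> *\<^sub>R d'"
  have dq: "dist q v = min e r / 2"
    using nd \<epsilon>0 e r by (simp add: q_def dist_norm \<epsilon>_def)
  have "q \<in> Ov" using e dq by (auto simp: dist_commute)
  have qP: "q \<in> P"
    unfolding inP
  proof
    fix h assume hF: "h \<in> Fh"
    have "a h \<bullet> v \<le> b h" using vP inP hF by blast
    then consider "a h \<bullet> v < b h" | "a h \<bullet> v = b h" by linarith
    then show "a h \<bullet> q \<le> b h"
    proof cases
      case 1 then show ?thesis using \<open>q \<in> Ov\<close> hF unfolding Ov_def by fastforce
    next
      case 2
      have "a h \<bullet> q = b h + \<epsilon> * (a h \<bullet> d')" using 2 by (simp add: q_def inner_add_right)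
      moreover have "\<epsilon> * (a h \<bullet> d') \<le> 0" using tight[OF hF 2] \<epsilon>0 by (simp add: mult_nonneg_nonpos)
      ultimately show ?thesis by simp
    qed
  qed
  have "q \<noteq> v" using \<epsilon>0 d'0 by (simp add: q_def)
  moreover have "dist q v < r" using dq e r by simp
  moreover have "\<forall>C\<in>S. q \<in> C"
  proof
    fix C assume CS: "C \<in> S"
    have hc2: "C = P \<inter> {x. a (hc C) \<bullet> x = b (hc C)}" using hc CS by auto
    have "v \<in> C" using CS Ssub by blast
    then have "a (hc C) \<bullet> v = b (hc C)" using hc2 by blast
    then have "a (hc C) \<bullet> q = b (hc C)" using d'orth[OF CS] by (simp add: q_def inner_add_right)
    then show "q \<in> C" using hc2 qP by blast
  qed
  ultimately show ?thesis using qP by blast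
qed



lemma iso_zero: "0 \<in> isotropy P lam p"
  unfolding isotropy_def using lattice_zero span_zero by force

lemma iso_add: "s \<in> isotropy P lam p \<Longrightarrow> t \<in> isotropy P lam p \<Longrightarrow> s + t \<in> isotropy P lam p"
  unfolding isotropy_def
proof clarify
  fix w w' assume "w \<in> span (ivec ` lam ` {F. F facet_of P \<and> p \<in> F})" "s - w \<in> lattice"
    "w' \<in> span (ivec ` lam ` {F. F facet_of P \<and> p \<in> F})" "t - w' \<in> lattice"
  then show "\<exists>w\<in>span (ivec ` lam ` {F. F facet_of P \<and> p \<in> F}). s + t - w \<in> lattice"
    by (intro bexI[of _ "w + w'"]) (auto simp: span_add dest: lattice_add[of "s - w" "t - w'"] simp: algebra_simps)
qed

lemma iso_neg: "s \<in> isotropy P lam p \<Longrightarrow> - s \<in> isotropy P lam p"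
  unfolding isotropy_def
proof clarify
  fix w assume "w \<in> span (ivec ` lam ` {F. F facet_of P \<and> p \<in> F})" "s - w \<in> lattice"
  then show "\<exists>w\<in>span (ivec ` lam ` {F. F facet_of P \<and> p \<in> F}). - s - w \<in> lattice"
    by (intro bexI[of _ "- w"]) (auto simp: span_neg dest: lattice_diff[OF lattice_zero, of "s - w"])
qed

lemma iso_diff: "s \<in> isotropy P lam p \<Longrightarrow> t \<in> isotropy P lam p \<Longrightarrow> s - t \<in> isotropy P lam p"
  using iso_add[OF _ iso_neg, of s P lam p t] by simp

lemma span_sub_iso: "span (ivec ` lam ` {F. F facet_of P \<and> p \<in> F}) \<subseteq> isotropy P lam p"
  unfolding isotropy_def using lattice_zero by force

lemma cls_eq: "p \<in> P \<Longrightarrow> qrel P lam `` {(p, g)} = {(p, h) | h. g - h \<in> isotropy P lam p}"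
  unfolding qrel_def by auto

lemma qspace_elem:
  assumes "y \<in> qspace P lam"
  obtains p g where "p \<in> P" "y = {(p, h) | h. g - h \<in> isotropy P lam p}"
  using assms unfolding qspace_def quotient_def using cls_eq by fastforce

lemma fixed_iff:
  "fixed_by H {(p, h) | h. g - h \<in> isotropy P lam p} \<longleftrightarrow> H \<subseteq> isotropy P lam p"
  (is "fixed_by H ?y \<longleftrightarrow> _")
proof
  assume fx: "fixed_by H ?y"
  show "H \<subseteq> isotropy P lam p"
  proof
    fix t assume tH: "t \<in> H"
    have "(p, g) \<in> ?y" using iso_zero by simp
    then have "(p, g + t) \<in> tact t ?y" unfolding tact_def by force
    then have "(p, g + t) \<in> ?y" using fx tH unfolding fixed_by_def by simp
    then have "- t \<in> isotropy P lam p" by simp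
    then show "t \<in> isotropy P lam p" using iso_neg by fastforce
  qed
next
  assume sub: "H \<subseteq> isotropy P lam p"
  show "fixed_by H ?y" unfolding fixed_by_def
  proof
    fix t assume "t \<in> H"
    then have t: "t \<in> isotropy P lam p" using sub by blast
    show "tact t ?y = ?y"
    proof
      show "tact t ?y \<subseteq> ?y" unfolding tact_def
      proof clarify
        fix h assume "g - h \<in> isotropy P lam p"
        then have "(g - h) - t \<in> isotropy P lam p" using iso_diff t by blast
        then show "\<exists>h'. (p, h + t) = (p, h') \<and> g - h' \<in> isotropy P lam p" by (simp add: algebra_simps)
      qed
      show "?y \<subseteq> tact t ?y" unfolding tact_def
      proof clarify
        fix h assume "g - h \<in> isotropy P lam p"
        then have "(g - h) + t \<in> isotropy P lam p" using iso_add t by blast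
        then have "g - (h - t) \<in> isotropy P lam p" by (simp add: algebra_simps)
        then have "(p, h - t) \<in> ?y" by blast
        moreover have "(p, h) = (\<lambda>(p, g). (p, g + t)) (p, h - t)" by simp
        ultimately show "(p, h) \<in> (\<lambda>(p, g). (p, g + t)) ` ?y" by blast
      qed
    qed
  qed
qed



theorem lemma2p2:
  fixes P :: "(real^'n) set" and lam :: "(real^'n) set \<Rightarrow> int^'n"
    and V :: "(real^'n) set" and x :: "((real^'n) \<times> (real^'n)) set"
    and v g :: "real^'n"
  assumes "simple_polytope P"
    and "char_function P lam"
    and "subtorus_codim1 V"
    and "x \<in> qspace P lam"
    and "fixed_by UNIV x"
    and "(v, g) \<in> x"
  shows "\<not> isolated_fixed_point P lam V x \<longleftrightarrow>
    (\<exists>S. S \<subseteq> {F. F facet_of P \<and> v \<in> F} \<and> card S = CARD('n) - 1 \<and>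
         (\<forall>F\<in>S. lam F \<in> Pi_lattice V))"
proof -
  note simp = assms(1) and xq = assms(4) and fixU = assms(5) and vgx = assms(6)
  have poly: "polytope P" and dimP: "aff_dim P = int CARD('n)"
    and simpl: "\<And>w. w extreme_point_of P \<Longrightarrow> card {F. F facet_of P \<and> w \<in> F} = CARD('n)"
    using simp unfolding simple_polytope_def by auto
  have subV: "subspace V" and dimV: "dim V = CARD('n) - 1"
    using assms(3) unfolding subtorus_codim1_def by auto
  have polyh: "polyhedron P" using poly by (simp add: polytope_imp_polyhedron)
  obtain p g0 where pP: "p \<in> P" and xeq: "x = {(p, h) | h. g0 - h \<in> isotropy P lam p}"
    using qspace_elem[OF xq] by blast
  have vp: "v = p" using vgx xeq by blast
  have vP: "v \<in> P" using pP vp by simp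
  have isoU: "isotropy P lam v = UNIV"
    using fixU xeq vp fixed_iff by blast
  have xUV: "x = {(v, h) | h. True}" using xeq vp isoU by simp
  define Fv where "Fv = {F. F facet_of P \<and> v \<in> F}"
  have finFac: "finite {F. F facet_of P}" using finite_polytope_facets[OF poly] by simp
  have finFv: "finite Fv" unfolding Fv_def using finFac by (rule rev_finite_subset) blast
  have spanU: "UNIV \<subseteq> span (ivec ` lam ` Fv)"
    by (rule kronecker) (use isoU in \<open>auto simp: Fv_def isotropy_def\<close>)
  have "CARD('n) = dim (UNIV :: (real^'n) set)" by simp
  also have "\<dots> \<le> card (ivec ` lam ` Fv)" using spanU finFv by (intro dim_le_card) auto
  also have "\<dots> \<le> card (lam ` Fv)" by (rule card_image_le) (use finFv in simp)
  also have "\<dots> \<le> card Fv" by (rule card_image_le[OF finFv])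
  finally have cardFv_ge: "CARD('n) \<le> card Fv" .
  have pin: "q = w" if "w extreme_point_of P" "q \<in> P" "\<forall>F\<in>{F. F facet_of P \<and> w \<in> F}. q \<in> F" for w q
  proof -
    have f: "{w} face_of P" using that(1) by (simp add: face_of_singleton)
    have "{w} \<noteq> P"
    proof
      assume "{w} = P"
      then have "aff_dim P = 0" by auto
      with dimP show False by simp
    qed
    then have e: "{w} = \<Inter>{F. F facet_of P \<and> {w} \<subseteq> F}" using face_of_polyhedron[OF polyh f] by blast
    have "q \<in> \<Inter>{F. F facet_of P \<and> {w} \<subseteq> F}" using that(3) by auto
    then show ?thesis using e by blast
  qed
  have vext: "v extreme_point_of P"
  proof -
    have Fvne: "Fv \<noteq> {}" using cardFv_ge by auto
    have Kf: "(\<Inter>Fv) face_of P" using Fvne by (intro face_of_Inter) (auto simp: Fv_def facet_of_imp_face_of)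
    have "compact (\<Inter>Fv)" using face_of_imp_compact[OF polytope_imp_convex[OF poly] polytope_imp_compact[OF poly] Kf] .
    moreover have "convex (\<Inter>Fv)" using Kf face_of_imp_convex by blast
    moreover have vK: "v \<in> \<Inter>Fv" by (auto simp: Fv_def)
    ultimately obtain w where "w extreme_point_of (\<Inter>Fv)" using extreme_point_exists_convex by blast
    then have wext: "w extreme_point_of P" and wK: "w \<in> \<Inter>Fv" using extreme_point_of_face[OF Kf] by auto
    have sub: "Fv \<subseteq> {F. F facet_of P \<and> w \<in> F}" using wK by (auto simp: Fv_def)
    have finFw: "finite {F. F facet_of P \<and> w \<in> F}" using finFac by (rule rev_finite_subset) blast
    have "Fv = {F. F facet_of P \<and> w \<in> F}"
    proof (rule card_subset_eq[OF finFw sub])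
      have "card Fv \<le> card {F. F facet_of P \<and> w \<in> F}" by (rule card_mono[OF finFw sub])
      then show "card Fv = card {F. F facet_of P \<and> w \<in> F}" using simpl[OF wext] cardFv_ge by simp
    qed
    then have "v = w" using pin[OF wext vP] vK by auto
    then show ?thesis using wext by simp
  qed
  have cardFv: "card Fv = CARD('n)" using simpl[OF vext] by (simp add: Fv_def)
  have pinv: "q = v" if "q \<in> P" "\<forall>F\<in>Fv. q \<in> F" for q
    using pin[OF vext that(1)] that(2) by (simp add: Fv_def)
  show ?thesis
  proof
    assume niso: "\<not> isolated_fixed_point P lam V x"
    show "\<exists>S. S \<subseteq> {F. F facet_of P \<and> v \<in> F} \<and> card S = CARD('n) - 1 \<and> (\<forall>F\<in>S. lam F \<in> Pi_lattice V)"
    proof (rule ccontr)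
      assume noS: "\<not> ?thesis"
      define Ov where "Ov = - \<Union>{F. F facet_of P \<and> v \<notin> F}"
      have "closed (\<Union>{F. F facet_of P \<and> v \<notin> F})"
      proof (rule closed_Union)
        show "finite {F. F facet_of P \<and> v \<notin> F}" using finFac by (rule rev_finite_subset) blast
        show "\<forall>F\<in>{F. F facet_of P \<and> v \<notin> F}. closed F"
          using face_of_imp_closed[OF polytope_imp_convex[OF poly] compact_imp_closed[OF polytope_imp_compact[OF poly]]]
          by (auto simp: facet_of_imp_face_of)
      qed
      then have openOv: "open Ov" unfolding Ov_def by (simp add: open_Compl)
      have vOv: "v \<in> Ov" unfolding Ov_def by blast
      define U where "U = ((P \<inter> Ov) \<times> UNIV) // qrel P lam"
      have Ucls: "y \<in> U \<longleftrightarrow> (\<exists>q h. q \<in> P \<inter> Ov \<and> y = {(q, h') | h'. h - h' \<in> isotropy P lam q})" for y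
        unfolding U_def quotient_def using cls_eq by fastforce
      have UnU: "\<Union>U = (P \<inter> Ov) \<times> UNIV"
      proof
        show "\<Union>U \<subseteq> (P \<inter> Ov) \<times> UNIV"
        proof
          fix z assume "z \<in> \<Union>U"
          then obtain y where "y \<in> U" "z \<in> y" by blast
          then obtain q h where "q \<in> P \<inter> Ov" "y = {(q, h') | h'. h - h' \<in> isotropy P lam q}"
            using Ucls by blast
          then show "z \<in> (P \<inter> Ov) \<times> UNIV" using \<open>z \<in> y\<close> by auto
        qed
        show "(P \<inter> Ov) \<times> UNIV \<subseteq> \<Union>U"
        proof clarify
          fix q h assume "q \<in> P" "q \<in> Ov"
          then have "{(q, h') | h'. h - h' \<in> isotropy P lam q} \<in> U" using Ucls by blast
          moreover have "(q, h) \<in> {(q, h') | h'. h - h' \<in> isotropy P lam q}" using iso_zero by simp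
          ultimately show "(q, h) \<in> \<Union>U" by blast
        qed
      qed
      have qo: "qopen P lam U"
        unfolding qopen_def
      proof
        show "U \<subseteq> qspace P lam" unfolding U_def qspace_def quotient_def by blast
        have "(P \<inter> Ov) \<times> UNIV = (P \<times> UNIV) \<inter> (Ov \<times> UNIV)" by blast
        moreover have "open (Ov \<times> (UNIV :: (real^'n) set))" using openOv by (simp add: open_Times)
        ultimately show "openin (top_of_set (P \<times> UNIV)) (\<Union>U)" using UnU openin_open_Int[of "Ov \<times> UNIV" "P \<times> UNIV"] by metis
      qed
      have xinU: "x \<in> U"
      proof -
        have "{(v, h') | h'. g - h' \<in> isotropy P lam v} \<in> U" using Ucls vP vOv by blast
        then show ?thesis using xUV isoU by simp
      qed
      have "isolated_fixed_point P lam V x"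
        unfolding isolated_fixed_point_def
      proof (intro conjI exI[of _ U])
        show "fixed_by V x" using fixU unfolding fixed_by_def by blast
        show "qopen P lam U" by (rule qo)
        show "x \<in> U" by (rule xinU)
        show "\<forall>y\<in>U. fixed_by V y \<longrightarrow> y = x"
        proof (intro ballI impI)
          fix y assume yU: "y \<in> U" and fy: "fixed_by V y"
          obtain q h where qPO: "q \<in> P \<inter> Ov" and yeq: "y = {(q, h') | h'. h - h' \<in> isotropy P lam q}"
            using Ucls yU by blast
          define Fq where "Fq = {F. F facet_of P \<and> q \<in> F}"
          have VsubI: "V \<subseteq> isotropy P lam q" using fy yeq fixed_iff by blast
          have Vsub: "V \<subseteq> span (ivec ` lam ` Fq)"
            by (rule kronecker[OF subV]) (use VsubI in \<open>auto simp: Fq_def isotropy_def\<close>)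
          have FqFv: "Fq \<subseteq> Fv" using qPO unfolding Fq_def Fv_def Ov_def by blast
          have finFq: "finite Fq" using finFv FqFv finite_subset by blast
          have c1: "dim V \<le> card (ivec ` lam ` Fq)" using Vsub finFq by (intro dim_le_card) auto
          have "card (ivec ` lam ` Fq) \<le> card (lam ` Fq)" by (rule card_image_le) (use finFq in simp)
          also have "\<dots> \<le> card Fq" by (rule card_image_le[OF finFq])
          finally have c2: "card (ivec ` lam ` Fq) \<le> card Fq" .
          have c3: "card Fq \<le> card Fv" using finFv FqFv card_mono by blast
          show "y = x"
          proof (cases "card Fq = CARD('n)")
            case True
            then have "Fq = Fv" using card_subset_eq[OF finFv FqFv] cardFv by simp
            then have "q = v" using pinv qPO by (auto simp: Fq_def)
            then show ?thesis using yeq xUV isoU by simp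
          next
            case False
            then have cq: "card Fq = CARD('n) - 1" using c1 c2 c3 cardFv dimV by linarith
            have "dim (span (ivec ` lam ` Fq)) \<le> dim V"
            proof -
              have "dim (span (ivec ` lam ` Fq)) = dim (ivec ` lam ` Fq)" by simp
              also have "\<dots> \<le> card (ivec ` lam ` Fq)" by (rule dim_le_card') (use finFq in simp)
              finally show ?thesis using c2 cq dimV by simp
            qed
            then have "V = span (ivec ` lam ` Fq)"
              using subspace_dim_equal[OF subV subspace_span Vsub] by blast
            then have "\<forall>F\<in>Fq. lam F \<in> Pi_lattice V" by (auto simp: Pi_lattice_def span_base)
            moreover have "Fq \<subseteq> {F. F facet_of P \<and> v \<in> F}" using FqFv by (simp add: Fv_def)
            ultimately show ?thesis using cq noS by blast
          qed
        qed
      qed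
      with niso show False by blast
    qed
  next
    assume "\<exists>S. S \<subseteq> {F. F facet_of P \<and> v \<in> F} \<and> card S = CARD('n) - 1 \<and> (\<forall>F\<in>S. lam F \<in> Pi_lattice V)"
    then obtain S where SFv: "S \<subseteq> Fv" and cS: "card S = CARD('n) - 1" and SV: "\<forall>F\<in>S. lam F \<in> Pi_lattice V"
      unfolding Fv_def by blast
    have finS: "finite S" using finFv SFv finite_subset by blast
    have "card (Fv - S) = 1" using card_Diff_subset[OF finS SFv] cardFv cS by simp
    then obtain F0 where F0: "Fv - S = {F0}" by (meson card_1_singletonE)
    have Fv_ins: "Fv \<subseteq> insert F0 S" using F0 by blast
    have spanS: "span (ivec ` lam ` S) = V"
    proof -
      have "span (ivec ` lam ` S) \<subseteq> V" using SV subV by (intro span_minimal) (auto simp: Pi_lattice_def)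
      moreover have "dim V \<le> dim (span (ivec ` lam ` S))"
      proof -
        have "UNIV \<subseteq> span (insert (ivec (lam F0)) (ivec ` lam ` S))"
        proof -
          have "ivec ` lam ` Fv \<subseteq> insert (ivec (lam F0)) (ivec ` lam ` S)" using Fv_ins by auto
          then show ?thesis using spanU span_mono by blast
        qed
        then have "CARD('n) \<le> dim (insert (ivec (lam F0)) (ivec ` lam ` S))"
        proof -
          have "dim (UNIV :: (real^'n) set) \<le> dim (span (insert (ivec (lam F0)) (ivec ` lam ` S)))"
            by (rule dim_subset) fact
          then show ?thesis by simp
        qed
        also have "\<dots> \<le> dim (ivec ` lam ` S) + 1" by (simp add: dim_insert)
        finally show ?thesis using dimV by simp
      qed
      ultimately show ?thesis using subspace_dim_equal[OF subspace_span subV] by blast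
    qed
    show "\<not> isolated_fixed_point P lam V x"
    proof
      assume "isolated_fixed_point P lam V x"
      then obtain U where qo: "qopen P lam U" and xU: "x \<in> U" and iso: "\<forall>y\<in>U. fixed_by V y \<longrightarrow> y = x"
        unfolding isolated_fixed_point_def by blast
      have Usub: "U \<subseteq> qspace P lam" and op: "openin (top_of_set (P \<times> UNIV)) (\<Union>U)"
        using qo unfolding qopen_def by auto
      obtain T where oT: "open T" and UT: "\<Union>U = (P \<times> UNIV) \<inter> T" using op by (auto simp: openin_open)
      have "(v, g) \<in> T" using UT xU vgx by blast
      then obtain r where r: "r > 0" "ball (v, g) r \<subseteq> T" using oT open_contains_ball by blast
      have cSl: "card S < CARD('n)" using cS by simp
      obtain q where qP: "q \<in> P" and qv: "q \<noteq> v" and dq: "dist q v < r" and qS: "\<forall>C\<in>S. q \<in> C"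
        using edge[OF poly dimP vP, of S F0 r] SFv cSl Fv_ins r unfolding Fv_def by blast
      have "dist (v, g) (q, g) < r" using dq by (simp add: dist_Pair_Pair dist_commute)
      then have "(q, g) \<in> \<Union>U" using UT r qP by auto
      then obtain y where yU: "y \<in> U" and qgy: "(q, g) \<in> y" by blast
      obtain q' g' where "q' \<in> P" and yeq: "y = {(q', h) | h. g' - h \<in> isotropy P lam q'}"
        using qspace_elem Usub yU by blast
      have "q' = q" using qgy yeq by blast
      have "V \<subseteq> isotropy P lam q"
      proof -
        have "S \<subseteq> {F. F facet_of P \<and> q \<in> F}" using SFv qS by (auto simp: Fv_def)
        then have "span (ivec ` lam ` S) \<subseteq> span (ivec ` lam ` {F. F facet_of P \<and> q \<in> F})"
          by (intro span_mono image_mono)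
        then show ?thesis using spanS span_sub_iso by blast
      qed
      then have "fixed_by V y" using yeq \<open>q' = q\<close> fixed_iff by blast
      then have "y = x" using iso yU by blast
      then show False using qgy xUV qv by blast
    qed
  qed
qed

end
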